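(* Let $D^*:\mathcal{A}\to\mathcal{A}$ be defined by $D^*v=\mathrm{Res}_w\, w^{-2}(\mathrm{Id}\otimes c)Y(w)v$ (the coefficient of $w^1$ in $(\mathrm{Id}\otimes c)Y(w)v\in\mathcal{A}[w]$). Then $D^*$ is a derivation of $\mathcal{A}$ with $D^*(t_{a,b})=b\,t_{a,b-1}$ for all $a,b\ge0$ (in particular $D^*(t_{0,n})=n\,t_{0,n-1}$, $D^*(t_{2,0})=0$), and the identity $$\frac{d}{dw}Y(w)=Y(w)D^*-(\mathrm{Id}\otimes D^* )Y(w)$$ holds as maps $\mathcal{A}\to(\mathcal{A}\otimes\mathcal{A})(\!(w^{-1})\!)$.
   Context: Fix $\epsilon_1+\epsilon_2+\epsilon_3=0$, $\sigma_2=\epsilon_1^2+\epsilon_1\epsilon_2+\epsilon_2^2$, $\sigma_3=\epsilon_1\epsilon_2\epsilon_3$. $\mathcal{A}=U_{\epsilon_1}(\mathfrak{gl}_1\otimes\mathrm{Diff}_{\epsilon_2}(\mathbb{C}))$ is the associative algebra with elements $t_{m,n}$ ($m,n\ge0$) satisfying $[t_{0,0},t_{c,d}]=0$, $[t_{1,0},t_{c,d}]=d\,t_{c,d-1}$, $[t_{0,1},t_{c,d}]=-c\,t_{c-1,d}$, $[t_{2,0},t_{c,d}]=2d\,t_{c+1,d-1}$, $[t_{1,1},t_{c,d}]=(d-c)t_{c,d}$, $[t_{0,2},t_{c,d}]=-2c\,t_{c-1,d+1}$, and $[t_{3,0},t_{c,d}]=3d\,t_{c+2,d-1}+\sigma_2\frac{d(d-1)(d-2)}{4}t_{c,d-3}+\frac{3}{2}\sigma_3\sum_{m=0}^{d-3}\sum_{n=0}^{c}\frac{\binom{m+n+1}{n+1}(n+1)\binom{d-m+c-n-2}{c-n+1}(c-n+1)}{\binom{d+c}{c}}t_{n,m}t_{c-n,d-3-m}$;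 it is generated by $t_{2,0}$ and $t_{0,n}$, $n\ge0$. $Y(w)=\Delta_{\mathcal{A}}:\mathcal{A}\to(\mathcal{A}\otimes\mathcal{A})(\!(w^{-1})\!)$ is the algebra homomorphism with $Y(w)t_{0,n}=1\otimes t_{0,n}+\sum_{m=0}^n\binom{n}{m}w^{n-m}t_{0,m}\otimes1$ and $Y(w)t_{2,0}=1\otimes t_{2,0}+t_{2,0}\otimes1+2\sigma_3\sum_{m,n\ge0}\frac{(m+n+1)!}{m!n!}(-1)^nw^{-n-m-2}t_{0,n}\otimes t_{0,m}$. $c:\mathcal{A}\to\mathbb{C}$ is the augmentation algebra homomorphism with $c(1)=1$, $c(t_{a,b})=0$. *)

theory Defs
  imports Complex_Main
begin

text \<open>A ring 'a is a C-algebra via sc, where z . x := sc z * x.\<close>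
definition calg :: "(complex \<Rightarrow> 'a::ring_1) \<Rightarrow> bool" where
  "calg sc \<longleftrightarrow> (\<forall>z w. sc (z + w) = sc z + sc w) \<and> (\<forall>z w. sc (z * w) = sc z * sc w)
     \<and> sc 1 = 1 \<and> (\<forall>z x. sc z * x = x * sc z)"

definition clinear_map :: "(complex \<Rightarrow> 'a::ring_1) \<Rightarrow> (complex \<Rightarrow> 'b::ring_1) \<Rightarrow> ('a \<Rightarrow> 'b) \<Rightarrow> bool" where
  "clinear_map scA scB f \<longleftrightarrow> (\<forall>x y. f (x + y) = f x + f y) \<and> (\<forall>z x. f (scA z * x) = scB z * f x)"

definition cbilinear :: "(complex \<Rightarrow> 'a::ring_1) \<Rightarrow> (complex \<Rightarrow> 'b::ring_1) \<Rightarrow> ('a \<Rightarrow> 'a \<Rightarrow> 'b) \<Rightarrow> bool" where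
  "cbilinear scA scB f \<longleftrightarrow> (\<forall>y. clinear_map scA scB (\<lambda>x. f x y)) \<and> (\<forall>x. clinear_map scA scB (f x))"

definition comm :: "'a::ring \<Rightarrow> 'a \<Rightarrow> 'a" where
  "comm x y = x * y - y * x"

inductive_set alg_gen :: "(complex \<Rightarrow> 'a::ring_1) \<Rightarrow> 'a set \<Rightarrow> 'a set" for sc G where
  gen: "x \<in> G \<Longrightarrow> x \<in> alg_gen sc G"
| scal: "sc z \<in> alg_gen sc G"
| add: "x \<in> alg_gen sc G \<Longrightarrow> y \<in> alg_gen sc G \<Longrightarrow> x + y \<in> alg_gen sc G"
| mult: "x \<in> alg_gen sc G \<Longrightarrow> y \<in> alg_gen sc G \<Longrightarrow> x * y \<in> alg_gen sc G"

text \<open>'b with tens x y = x \<otimes> y is the tensor square of the C-algebra 'a (as an algebra,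
  with factorwise multiplication); universal property stated for targets 'a and 'b.\<close>
definition is_tensor_square ::
  "(complex \<Rightarrow> 'a::ring_1) \<Rightarrow> (complex \<Rightarrow> 'b::ring_1) \<Rightarrow> ('a \<Rightarrow> 'a \<Rightarrow> 'b) \<Rightarrow> bool" where
  "is_tensor_square sc sc2 tens \<longleftrightarrow> calg sc2 \<and> cbilinear sc sc2 tens \<and> tens 1 1 = 1
     \<and> (\<forall>x y x' y'. tens x y * tens x' y' = tens (x * x') (y * y'))
     \<and> (\<forall>f::'a \<Rightarrow> 'a \<Rightarrow> 'a. cbilinear sc sc f \<longrightarrow>
           (\<exists>!L. clinear_map sc2 sc L \<and> (\<forall>x y. L (tens x y) = f x y)))
     \<and> (\<forall>f::'a \<Rightarrow> 'a \<Rightarrow> 'b. cbilinear sc sc2 f \<longrightarrow>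
           (\<exists>!L. clinear_map sc2 sc2 L \<and> (\<forall>x y. L (tens x y) = f x y)))"

definition tlift :: "(complex \<Rightarrow> 'b::ring_1) \<Rightarrow> (complex \<Rightarrow> 'c::ring_1) \<Rightarrow> ('a \<Rightarrow> 'a \<Rightarrow> 'b)
    \<Rightarrow> ('a \<Rightarrow> 'a \<Rightarrow> 'c) \<Rightarrow> 'b \<Rightarrow> 'c" where
  "tlift scB scC tens f = (THE L. clinear_map scB scC L \<and> (\<forall>x y. L (tens x y) = f x y))"

section \<open>Laurent series in w^{-1}: coefficient functions with support bounded above\<close>

definition laurent :: "(int \<Rightarrow> 'b::zero) \<Rightarrow> bool" where
  "laurent F \<longleftrightarrow> (\<exists>N. \<forall>k>N. F k = 0)"

definition lmul :: "(int \<Rightarrow> 'b::ring) \<Rightarrow> (int \<Rightarrow> 'b) \<Rightarrow> int \<Rightarrow> 'b" where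
  "lmul F G k = (\<Sum>i | F i \<noteq> 0 \<and> G (k - i) \<noteq> 0. F i * G (k - i))"

definition lone :: "int \<Rightarrow> 'b::{zero,one}" where
  "lone k = (if k = 0 then 1 else 0)"

definition sigma2 :: "complex \<Rightarrow> complex \<Rightarrow> complex" where
  "sigma2 e1 e2 = e1^2 + e1 * e2 + e2^2"

definition sigma3 :: "complex \<Rightarrow> complex \<Rightarrow> complex \<Rightarrow> complex" where
  "sigma3 e1 e2 e3 = e1 * e2 * e3"

definition A_relations :: "(complex \<Rightarrow> 'a::ring_1) \<Rightarrow> complex \<Rightarrow> complex \<Rightarrow> complex
    \<Rightarrow> (nat \<Rightarrow> nat \<Rightarrow> 'a) \<Rightarrow> bool" where
  "A_relations sc e1 e2 e3 t \<longleftrightarrow> (\<forall>c d.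
     comm (t 0 0) (t c d) = 0
   \<and> comm (t 1 0) (t c d) = sc (of_nat d) * t c (d - 1)
   \<and> comm (t 0 1) (t c d) = sc (- of_nat c) * t (c - 1) d
   \<and> comm (t 2 0) (t c d) = sc (2 * of_nat d) * t (c + 1) (d - 1)
   \<and> comm (t 1 1) (t c d) = sc (of_nat d - of_nat c) * t c d
   \<and> comm (t 0 2) (t c d) = sc (- 2 * of_nat c) * t (c - 1) (d + 1)
   \<and> comm (t 3 0) (t c d) =
        sc (3 * of_nat d) * t (c + 2) (d - 1)
      + sc (sigma2 e1 e2 * of_nat d * (of_nat d - 1) * (of_nat d - 2) / 4) * t c (d - 3)
      + (if 3 \<le> d then
          sc (3 / 2 * sigma3 e1 e2 e3) *
          (\<Sum>m\<in>{0..d - 3}. \<Sum>n\<in>{0..c}.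
             sc (of_nat ((m + n + 1) choose (n + 1)) * of_nat (n + 1)
                 * of_nat ((d - m + c - n - 2) choose (c - n + 1)) * of_nat (c - n + 1)
                 / of_nat ((d + c) choose c))
             * (t n m * t (c - n) (d - 3 - m)))
         else 0))"

text \<open>Coefficient of w^k in Y(w) t_{0,n}.\<close>
definition Y_t0 :: "('a::ring_1 \<Rightarrow> 'a \<Rightarrow> 'b::ring_1) \<Rightarrow> (complex \<Rightarrow> 'b) \<Rightarrow> (nat \<Rightarrow> nat \<Rightarrow> 'a) \<Rightarrow> nat \<Rightarrow> int \<Rightarrow> 'b" where
  "Y_t0 tens sc2 t n k =
     (if k = 0 then tens 1 (t 0 n) else 0)
   + (if 0 \<le> k \<and> k \<le> int n then sc2 (of_nat (n choose nat k)) * tens (t 0 (n - nat k)) 1 else 0)"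

text \<open>Coefficient of w^k in Y(w) t_{2,0}.\<close>
definition Y_t2 :: "('a::ring_1 \<Rightarrow> 'a \<Rightarrow> 'b::ring_1) \<Rightarrow> (complex \<Rightarrow> 'b) \<Rightarrow> complex \<Rightarrow> (nat \<Rightarrow> nat \<Rightarrow> 'a) \<Rightarrow> int \<Rightarrow> 'b" where
  "Y_t2 tens sc2 s3 t k =
     (if k = 0 then tens 1 (t 2 0) + tens (t 2 0) 1 else 0)
   + (if k \<le> -2 then
        (\<Sum>n\<in>{0..nat (- k - 2)}. let m = nat (- k - 2) - n in
           sc2 (2 * s3 * of_nat (fact (m + n + 1)) / (of_nat (fact m) * of_nat (fact n)) * (-1) ^ n)
           * tens (t 0 n) (t 0 m))
      else 0)"

text \<open>D^* v = Res_w w^{-2} (Id \<otimes> c) Y(w) v, i.e. (Id \<otimes> c) applied to the w^1 coefficient.\<close>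
definition Dstar :: "(complex \<Rightarrow> 'a::ring_1) \<Rightarrow> (complex \<Rightarrow> 'b::ring_1) \<Rightarrow> ('a \<Rightarrow> 'a \<Rightarrow> 'b)
    \<Rightarrow> ('a \<Rightarrow> complex) \<Rightarrow> ('a \<Rightarrow> int \<Rightarrow> 'b) \<Rightarrow> 'a \<Rightarrow> 'a" where
  "Dstar sc sc2 tens c Y v = tlift sc2 sc tens (\<lambda>x y. sc (c y) * x) (Y v 1)"

end

theory Submission
  imports Defs
begin


lemma calg_zero: "calg sc \<Longrightarrow> sc 0 = 0"
proof -
  assume a: "calg sc"
  have "sc (0+0) = sc 0 + sc 0" using a unfolding calg_def by blast
  thus ?thesis by simp
qed

lemma calg_add: "calg sc \<Longrightarrow> sc (a + b) = sc a + sc b" unfolding calg_def by blast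
lemma calg_mult: "calg sc \<Longrightarrow> sc (a * b) = sc a * sc b" unfolding calg_def by blast
lemma calg_one: "calg sc \<Longrightarrow> sc 1 = 1" unfolding calg_def by blast
lemma calg_comm: "calg sc \<Longrightarrow> sc z * x = x * sc z" unfolding calg_def by blast

lemma calg_neg: "calg sc \<Longrightarrow> sc (- a) = - sc a"
proof -
  assume a: "calg sc"
  have "sc (-a + a) = sc (-a) + sc a" using calg_add[OF a] .
  hence "sc (-a) + sc a = 0" using calg_zero[OF a] by simp
  thus ?thesis by (simp add: eq_neg_iff_add_eq_0)
qed

lemma calg_diff: "calg sc \<Longrightarrow> sc (a - b) = sc a - sc b"
  using calg_add[of sc a "-b"] calg_neg[of sc b] by simp

lemma calg_of_nat: "calg sc \<Longrightarrow> sc (of_nat n) = of_nat n"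
  by (induction n) (simp_all add: calg_zero calg_add calg_one)

lemma calg_of_int: "calg sc \<Longrightarrow> sc (of_int n) = of_int n"
  by (cases n rule: int_cases) (simp_all add: calg_of_nat calg_neg calg_diff calg_one)

lemma lin_add: "clinear_map s1 s2 f \<Longrightarrow> f (x + y) = f x + f y" unfolding clinear_map_def by blast
lemma lin_scal: "clinear_map s1 s2 f \<Longrightarrow> f (s1 z * x) = s2 z * f x" unfolding clinear_map_def by blast
lemma lin_zero: "clinear_map s1 s2 f \<Longrightarrow> f 0 = 0"
proof -
  assume a: "clinear_map s1 s2 f"
  have "f (0+0) = f 0 + f 0" using lin_add[OF a] .
  thus ?thesis by simp
qed
lemma lin_neg: "clinear_map s1 s2 f \<Longrightarrow> f (- x) = - f x"
proof -
  assume a: "clinear_map s1 s2 f"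
  have "f (-x + x) = f (-x) + f x" using lin_add[OF a] .
  hence "f (-x) + f x = 0" using lin_zero[OF a] by simp
  thus ?thesis by (simp add: eq_neg_iff_add_eq_0)
qed
lemma lin_diff: "clinear_map s1 s2 f \<Longrightarrow> f (x - y) = f x - f y"
  using lin_add[of s1 s2 f x "-y"] lin_neg[of s1 s2 f y] by simp
lemma lin_sum: "clinear_map s1 s2 f \<Longrightarrow> f (sum g S) = (\<Sum>i\<in>S. f (g i))"
  by (induction S rule: infinite_finite_induct) (simp_all add: lin_zero lin_add)

lemma bil_add1: "cbilinear s1 s2 f \<Longrightarrow> f (x + x') y = f x y + f x' y"
  unfolding cbilinear_def clinear_map_def by blast
lemma bil_add2: "cbilinear s1 s2 f \<Longrightarrow> f x (y + y') = f x y + f x y'"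
  unfolding cbilinear_def clinear_map_def by blast
lemma bil_scal1: "cbilinear s1 s2 f \<Longrightarrow> f (s1 z * x) y = s2 z * f x y"
  unfolding cbilinear_def clinear_map_def by blast
lemma bil_scal2: "cbilinear s1 s2 f \<Longrightarrow> f x (s1 z * y) = s2 z * f x y"
  unfolding cbilinear_def clinear_map_def by blast
lemma bil_lin1: "cbilinear s1 s2 f \<Longrightarrow> clinear_map s1 s2 (\<lambda>x. f x y)"
  unfolding cbilinear_def by blast
lemma bil_lin2: "cbilinear s1 s2 f \<Longrightarrow> clinear_map s1 s2 (f x)"
  unfolding cbilinear_def by blast

lemma bilI:
  assumes "\<And>x x' y. f (x + x') y = f x y + f x' y"
    and "\<And>x x' y. f x (x' + y) = f x x' + f x y"
    and "\<And>z x y. f (s1 z * x) y = s2 z * f x y"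
    and "\<And>z x y. f x (s1 z * y) = s2 z * f x y"
  shows "cbilinear s1 s2 f"
  unfolding cbilinear_def clinear_map_def using assms by blast

lemma comp_bil:
  assumes "cbilinear s1 s2 f" "clinear_map s2 s3 L"
  shows "cbilinear s1 s3 (\<lambda>x y. L (f x y))"
  by (rule bilI) (simp_all add: bil_add1[OF assms(1)] bil_add2[OF assms(1)]
       bil_scal1[OF assms(1)] bil_scal2[OF assms(1)] lin_add[OF assms(2)] lin_scal[OF assms(2)])

lemma ts_calg2: "is_tensor_square sc sc2 tens \<Longrightarrow> calg sc2"
  unfolding is_tensor_square_def by blast
lemma ts_bil: "is_tensor_square sc sc2 tens \<Longrightarrow> cbilinear sc sc2 tens"
  unfolding is_tensor_square_def by blast
lemma ts_one: "is_tensor_square sc sc2 tens \<Longrightarrow> tens 1 1 = 1"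
  unfolding is_tensor_square_def by blast
lemma ts_mult: "is_tensor_square sc sc2 tens \<Longrightarrow> tens x y * tens x' y' = tens (x * x') (y * y')"
  unfolding is_tensor_square_def by blast

lemma tlift_a:
  assumes "is_tensor_square sc sc2 tens" "cbilinear sc sc f"
  shows "clinear_map sc2 sc (tlift sc2 sc tens f)" "\<And>x y. tlift sc2 sc tens f (tens x y) = f x y"
proof -
  have ex: "\<exists>!L. clinear_map sc2 sc L \<and> (\<forall>x y. L (tens x y) = f x y)"
    using assms unfolding is_tensor_square_def by blast
  have "clinear_map sc2 sc (tlift sc2 sc tens f) \<and> (\<forall>x y. tlift sc2 sc tens f (tens x y) = f x y)"
    unfolding tlift_def by (rule theI'[OF ex])
  thus "clinear_map sc2 sc (tlift sc2 sc tens f)" "\<And>x y. tlift sc2 sc tens f (tens x y) = f x y"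
    by blast+
qed

lemma tlift_b:
  assumes "is_tensor_square sc sc2 tens" "cbilinear sc sc2 f"
  shows "clinear_map sc2 sc2 (tlift sc2 sc2 tens f)" "\<And>x y. tlift sc2 sc2 tens f (tens x y) = f x y"
proof -
  have ex: "\<exists>!L. clinear_map sc2 sc2 L \<and> (\<forall>x y. L (tens x y) = f x y)"
    using assms unfolding is_tensor_square_def by blast
  have "clinear_map sc2 sc2 (tlift sc2 sc2 tens f) \<and> (\<forall>x y. tlift sc2 sc2 tens f (tens x y) = f x y)"
    unfolding tlift_def by (rule theI'[OF ex])
  thus "clinear_map sc2 sc2 (tlift sc2 sc2 tens f)" "\<And>x y. tlift sc2 sc2 tens f (tens x y) = f x y"
    by blast+
qed

lemma ext_a:
  assumes ts: "is_tensor_square sc sc2 tens" and l1: "clinear_map sc2 sc L1" and l2: "clinear_map sc2 sc L2"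
    and eq: "\<And>x y. L1 (tens x y) = L2 (tens x y)"
  shows "L1 = L2"
proof -
  have b: "cbilinear sc sc (\<lambda>x y. L1 (tens x y))" by (rule comp_bil[OF ts_bil[OF ts] l1])
  have ex: "\<exists>!L. clinear_map sc2 sc L \<and> (\<forall>x y. L (tens x y) = L1 (tens x y))"
    using ts b unfolding is_tensor_square_def by blast
  have e1: "(THE L. clinear_map sc2 sc L \<and> (\<forall>x y. L (tens x y) = L1 (tens x y))) = L1"
    by (rule the1_equality[OF ex]) (simp add: l1)
  have e2: "(THE L. clinear_map sc2 sc L \<and> (\<forall>x y. L (tens x y) = L1 (tens x y))) = L2"
    by (rule the1_equality[OF ex]) (simp add: l2 eq)
  show ?thesis using e1 e2 by simp
qed

lemma ext_b:
  assumes ts: "is_tensor_square sc sc2 tens" and l1: "clinear_map sc2 sc2 L1" and l2: "clinear_map sc2 sc2 L2"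
    and eq: "\<And>x y. L1 (tens x y) = L2 (tens x y)"
  shows "L1 = L2"
proof -
  have b: "cbilinear sc sc2 (\<lambda>x y. L1 (tens x y))" by (rule comp_bil[OF ts_bil[OF ts] l1])
  have ex: "\<exists>!L. clinear_map sc2 sc2 L \<and> (\<forall>x y. L (tens x y) = L1 (tens x y))"
    using ts b unfolding is_tensor_square_def by blast
  have e1: "(THE L. clinear_map sc2 sc2 L \<and> (\<forall>x y. L (tens x y) = L1 (tens x y))) = L1"
    by (rule the1_equality[OF ex]) (simp add: l1)
  have e2: "(THE L. clinear_map sc2 sc2 L \<and> (\<forall>x y. L (tens x y) = L1 (tens x y))) = L2"
    by (rule the1_equality[OF ex]) (simp add: l2 eq)
  show ?thesis using e1 e2 by simp
qed

definition fsum :: "(int \<Rightarrow> 'b::comm_monoid_add) \<Rightarrow> 'b" where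
  "fsum f = sum f {i. f i \<noteq> 0}"

lemma fsum_superset:
  assumes "finite I" "\<And>i. i \<notin> I \<Longrightarrow> f i = 0"
  shows "fsum f = sum f I"
proof -
  have sub: "{i. f i \<noteq> 0} \<subseteq> I" using assms(2) by blast
  show ?thesis unfolding fsum_def
    by (rule sum.mono_neutral_left[OF assms(1) sub]) auto
qed

lemma fsum_shift: "fsum (\<lambda>i. f (i + a)) = fsum f"
proof -
  have "{i. f (i + a) \<noteq> 0} = (\<lambda>i. i - a) ` {i. f i \<noteq> 0}"
  proof (rule set_eqI, rule iffI)
    fix x assume "x \<in> {i. f (i + a) \<noteq> 0}"
    thus "x \<in> (\<lambda>i. i - a) ` {i. f i \<noteq> 0}" by (intro image_eqI[where x="x+a"]) auto
  next
    fix x assume "x \<in> (\<lambda>i. i - a) ` {i. f i \<noteq> 0}"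
    thus "x \<in> {i. f (i + a) \<noteq> 0}" by auto
  qed
  moreover have "inj_on (\<lambda>i. i - a) {i. f i \<noteq> 0}" by (auto simp: inj_on_def)
  ultimately show ?thesis unfolding fsum_def
    by (simp add: sum.reindex o_def)
qed

lemma laurent_bound: "laurent F \<Longrightarrow> \<exists>N. \<forall>k>N. F k = 0"
  unfolding laurent_def by blast

lemma lmul_fsum:
  fixes F G :: "int \<Rightarrow> 'b::ring"
  assumes "laurent F" "laurent G"
  shows "lmul F G k = fsum (\<lambda>i. F i * G (k - i))"
proof -
  obtain N1 where N1: "\<forall>i>N1. F i = 0" using assms(1) unfolding laurent_def by blast
  obtain N2 where N2: "\<forall>i>N2. G i = 0" using assms(2) unfolding laurent_def by blast
  let ?S = "{i. F i \<noteq> 0 \<and> G (k - i) \<noteq> 0}"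
  have a1: "i \<le> N1" if "F i \<noteq> 0" for i using N1 that by (meson not_le)
  have a2: "k - i \<le> N2" if "G (k - i) \<noteq> 0" for i using N2 that by (meson not_le)
  have sub: "?S \<subseteq> {k - N2..N1}"
  proof
    fix i assume "i \<in> ?S"
    then have "i \<le> N1" "k - i \<le> N2" using a1 a2 by auto
    thus "i \<in> {k - N2..N1}" by simp
  qed
  have fin: "finite ?S" by (rule finite_subset[OF sub]) simp
  have "fsum (\<lambda>i. F i * G (k - i)) = sum (\<lambda>i. F i * G (k - i)) ?S"
    by (rule fsum_superset[OF fin]) auto
  thus ?thesis unfolding lmul_def by simp
qed




lemma sum_single:
  assumes "finite I" "a \<in> I" "\<And>i. i \<in> I \<Longrightarrow> i \<noteq> a \<Longrightarrow> f i = 0"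
  shows "sum f I = f a"
proof -
  have "sum f I = f a + sum f (I - {a})" using assms(1,2) by (simp add: sum.remove)
  moreover have "sum f (I - {a}) = 0" using assms(3) by (intro sum.neutral) auto
  ultimately show ?thesis by simp
qed

lemma sum_two:
  assumes "finite I" "a \<in> I" "b \<in> I" "a \<noteq> b" "\<And>i. i \<in> I \<Longrightarrow> i \<noteq> a \<Longrightarrow> i \<noteq> b \<Longrightarrow> f i = 0"
  shows "sum f I = f a + f b"
proof -
  have "sum f I = f a + sum f (I - {a})" using assms(1,2) by (simp add: sum.remove)
  moreover have "sum f (I - {a}) = f b"
    by (rule sum_single) (use assms in auto)
  ultimately show ?thesis by simp
qed

lemma lmul_interval:
  fixes F G :: "int \<Rightarrow> 'b::ring"
  assumes "\<forall>i>N. F i = 0" "\<forall>i>N. G i = 0" "N \<le> M"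
  shows "lmul F G k = (\<Sum>i\<in>{k-M..M}. F i * G (k - i))"
proof -
  have l: "laurent F" "laurent G" using assms unfolding laurent_def by blast+
  show ?thesis unfolding lmul_fsum[OF l]
  proof (rule fsum_superset)
    fix i assume "i \<notin> {k-M..M}"
    hence "i > M \<or> k - i > M" by auto
    thus "F i * G (k - i) = 0" using assms by auto
  qed simp
qed

locale ctx =
  fixes sc :: "complex \<Rightarrow> 'a::ring_1" and sc2 :: "complex \<Rightarrow> 'b::ring_1"
    and tens :: "'a \<Rightarrow> 'a \<Rightarrow> 'b"
    and e1 e2 e3 :: complex
    and t :: "nat \<Rightarrow> nat \<Rightarrow> 'a"
    and Y :: "'a \<Rightarrow> int \<Rightarrow> 'b"
    and c :: "'a \<Rightarrow> complex"
  assumes eps: "e1 + e2 + e3 = 0"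
    and alg: "calg sc"
    and tensor: "is_tensor_square sc sc2 tens"
    and rels: "A_relations sc e1 e2 e3 t"
    and generated: "alg_gen sc ({t 2 0} \<union> range (t 0)) = UNIV"
    and Y_laurent: "\<forall>v. laurent (Y v)"
    and Y_add: "\<forall>u v. Y (u + v) = (\<lambda>k. Y u k + Y v k)"
    and Y_scal: "\<forall>z v. Y (sc z * v) = (\<lambda>k. sc2 z * Y v k)"
    and Y_mult: "\<forall>u v. Y (u * v) = lmul (Y u) (Y v)"
    and Y_one: "Y 1 = lone"
    and Y_t0n: "\<forall>n. Y (t 0 n) = Y_t0 tens sc2 t n"
    and Y_t20: "Y (t 2 0) = Y_t2 tens sc2 (sigma3 e1 e2 e3) t"
    and c_lin: "clinear_map sc (\<lambda>z. z) c"
    and c_mult: "\<forall>u v. c (u * v) = c u * c v"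
    and c_one: "c 1 = 1"
    and c_t: "\<forall>a b. c (t a b) = 0"
begin

lemma alg2: "calg sc2" using ts_calg2[OF tensor] .
lemma tb: "cbilinear sc sc2 tens" using ts_bil[OF tensor] .

lemma c_add: "c (x + y) = c x + c y" using lin_add[OF c_lin] .
lemma c_scal: "c (sc z * x) = z * c x" using lin_scal[OF c_lin] by simp

definition P :: "'b \<Rightarrow> 'a" where "P = tlift sc2 sc tens (\<lambda>x y. sc (c y) * x)"

lemma Pbil: "cbilinear sc sc (\<lambda>x y. sc (c y) * x)"
proof (rule bilI)
  fix x x' y show "sc (c y) * (x + x') = sc (c y) * x + sc (c y) * x'" by (simp add: distrib_left)
next
  fix x x' y show "sc (c (x' + y)) * x = sc (c x') * x + sc (c y) * x"
    by (simp add: c_add calg_add[OF alg] distrib_right)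
next
  fix z x y show "sc (c y) * (sc z * x) = sc z * (sc (c y) * x)"
    by (metis calg_comm[OF alg] mult.assoc)
next
  fix z x y show "sc (c (sc z * y)) * x = sc z * (sc (c y) * x)"
    by (simp add: c_scal calg_mult[OF alg] mult.assoc)
qed

lemma P_lin: "clinear_map sc2 sc P" unfolding P_def by (rule tlift_a(1)[OF tensor Pbil])
lemma P_tens: "P (tens x y) = sc (c y) * x" unfolding P_def by (rule tlift_a(2)[OF tensor Pbil])
lemma P_add: "P (x + y) = P x + P y" by (rule lin_add[OF P_lin])
lemma P_scal: "P (sc2 z * x) = sc z * P x" by (rule lin_scal[OF P_lin])
lemma P_zero: "P 0 = 0" by (rule lin_zero[OF P_lin])
lemma P_sum: "P (sum g S) = (\<Sum>i\<in>S. P (g i))" by (rule lin_sum[OF P_lin])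

lemma P_mult1: "P (x * tens a b) = P x * P (tens a b)"
proof -
  have l1: "clinear_map sc2 sc (\<lambda>x. P (x * tens a b))"
    unfolding clinear_map_def by (simp add: distrib_right P_add mult.assoc P_scal)
  have l2: "clinear_map sc2 sc (\<lambda>x. P x * P (tens a b))"
    unfolding clinear_map_def by (simp add: distrib_right P_add mult.assoc P_scal)
  have eq: "P (tens x y * tens a b) = P (tens x y) * P (tens a b)" for x y
  proof -
    have cm: "x * sc (c b) = sc (c b) * x" using calg_comm[OF alg] by metis
    have "P (tens x y * tens a b) = sc (c y) * sc (c b) * (x * a)"
      by (simp add: ts_mult[OF tensor] P_tens c_mult calg_mult[OF alg])
    also have "\<dots> = sc (c y) * (sc (c b) * x) * a" by (simp add: mult.assoc)
    also have "\<dots> = sc (c y) * x * (sc (c b) * a)" by (simp add: cm[symmetric] mult.assoc)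
    finally show ?thesis by (simp add: P_tens)
  qed
  have "(\<lambda>x. P (x * tens a b)) = (\<lambda>x. P x * P (tens a b))"
    by (rule ext_a[OF tensor l1 l2]) (rule eq)
  thus ?thesis by metis
qed

lemma P_mult: "P (x * y) = P x * P y"
proof -
  have l1: "clinear_map sc2 sc (\<lambda>y. P (x * y))"
    unfolding clinear_map_def
  proof (intro conjI allI)
    fix y y' show "P (x*(y+y')) = P(x*y)+P(x*y')" by (simp add: distrib_left P_add)
  next
    fix z y
    have "x * (sc2 z * y) = sc2 z * (x * y)" by (metis calg_comm[OF alg2] mult.assoc)
    thus "P (x * (sc2 z * y)) = sc z * P (x * y)" by (simp add: P_scal)
  qed
  have l2: "clinear_map sc2 sc (\<lambda>y. P x * P y)"
    unfolding clinear_map_def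
    by (simp add: distrib_left P_add P_scal mult.assoc[symmetric] calg_comm[OF alg, of _ "P x"])
  have "(\<lambda>y. P (x * y)) = (\<lambda>y. P x * P y)"
    by (rule ext_a[OF tensor l1 l2]) (rule P_mult1)
  thus ?thesis by metis
qed

lemma P_one: "P 1 = 1"
  using P_tens[of 1 1] by (simp add: ts_one[OF tensor] c_one calg_one[OF alg])

lemma P_const: "P (sc2 z) = sc z"
  using P_scal[of z 1] P_one by simp

lemma Y_addk: "Y (u + v) k = Y u k + Y v k" using Y_add by simp
lemma Y_scalk: "Y (sc z * v) k = sc2 z * Y v k" using Y_scal by simp
lemma Y_zero: "Y 0 k = 0"
proof -
  have "Y (0 + 0) k = Y 0 k + Y 0 k" by (rule Y_addk)
  thus ?thesis by simp
qed
lemma Y_const: "Y (sc z) k = sc2 z * lone k"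
  using Y_scalk[of z 1 k] Y_one by simp

lemma Y_bound: "\<exists>N. \<forall>i>N. Y v i = 0" using Y_laurent unfolding laurent_def by blast

lemma Y_bound2: "\<exists>N. N \<ge> 1 \<and> (\<forall>i>N. Y u i = 0) \<and> (\<forall>i>N. Y v i = 0)"
proof -
  obtain N1 where "\<forall>i>N1. Y u i = 0" using Y_bound by blast
  moreover obtain N2 where "\<forall>i>N2. Y v i = 0" using Y_bound by blast
  ultimately show ?thesis by (intro exI[of _ "max 1 (max N1 N2)"]) auto
qed

lemma Y_mult_sum:
  assumes "\<forall>i>N. Y u i = 0" "\<forall>i>N. Y v i = 0"
  shows "Y (u * v) k = (\<Sum>i\<in>{k-N..N}. Y u i * Y v (k - i))"
  using Y_mult lmul_interval[OF assms order_refl] by simp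

definition good :: "'a \<Rightarrow> bool" where
  "good v \<longleftrightarrow> (\<forall>k<0. P (Y v k) = 0) \<and> P (Y v 0) = v"

lemma good_all: "good v"
proof -
  have "v \<in> alg_gen sc ({t 2 0} \<union> range (t 0))" using generated by simp
  thus ?thesis
  proof (induction rule: alg_gen.induct)
    case (gen x)
    then show ?case
    proof
      assume x: "x \<in> {t 2 0}"
      have "P (Y x k) = 0" if "k < 0" for k
      proof -
        have "P (Y x k) = (if k \<le> -2 then
          (\<Sum>n\<in>{0..nat (- k - 2)}. P (sc2 (2 * sigma3 e1 e2 e3 * of_nat (fact (nat (- k - 2) - n + n + 1)) / (of_nat (fact (nat (- k - 2) - n)) * of_nat (fact n)) * (-1) ^ n)
           * tens (t 0 n) (t 0 (nat (- k - 2) - n)))) else 0)"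
          using x that by (simp add: Y_t20 Y_t2_def P_sum P_zero Let_def)
        also have "\<dots> = 0" by (simp add: P_scal P_tens c_t calg_zero[OF alg])
        finally show ?thesis .
      qed
      moreover have "P (Y x 0) = x"
        using x by (simp add: Y_t20 Y_t2_def P_add P_tens c_t c_one calg_zero[OF alg] calg_one[OF alg])
      ultimately show ?thesis unfolding good_def by blast
    next
      assume "x \<in> range (t 0)"
      then obtain n where x: "x = t 0 n" by blast
      have "P (Y x k) = 0" if "k < 0" for k
        using x that by (simp add: Y_t0n Y_t0_def P_zero)
      moreover have "P (Y x 0) = x"
        using x by (simp add: Y_t0n Y_t0_def P_add P_scal P_tens c_t c_one calg_zero[OF alg] calg_one[OF alg])
      ultimately show ?thesis unfolding good_def by blast
    qed
  next
    case (scal z)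
    show ?case unfolding good_def
      by (simp add: Y_const P_scal lone_def P_zero P_one P_const)
  next
    case (add x y)
    then show ?case unfolding good_def by (simp add: Y_addk P_add)
  next
    case (mult x y)
    obtain N where N: "N \<ge> 1" "\<forall>i>N. Y x i = 0" "\<forall>i>N. Y y i = 0" using Y_bound2 by blast
    have sm: "P (Y (x * y) k) = (\<Sum>i\<in>{k-N..N}. P (Y x i) * P (Y y (k - i)))" for k
      by (simp add: Y_mult_sum[OF N(2,3)] P_sum P_mult)
    have "P (Y (x * y) k) = 0" if "k < 0" for k
      unfolding sm
    proof (rule sum.neutral, rule ballI)
      fix i assume "i \<in> {k-N..N}"
      show "P (Y x i) * P (Y y (k - i)) = 0"
      proof (cases "i < 0")
        case True then show ?thesis using mult.IH(1) unfolding good_def by simp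
      next
        case False then have "k - i < 0" using that by simp
        then show ?thesis using mult.IH(2) unfolding good_def by simp
      qed
    qed
    moreover have "P (Y (x * y) 0) = x * y"
      unfolding sm
    proof -
      have "(\<Sum>i\<in>{0-N..N}. P (Y x i) * P (Y y (0 - i))) = P (Y x 0) * P (Y y (0 - 0))"
      proof (rule sum_single)
        fix i assume "i \<in> {0-N..N}" "i \<noteq> 0"
        show "P (Y x i) * P (Y y (0 - i)) = 0"
        proof (cases "i < 0")
          case True then show ?thesis using mult.IH(1) unfolding good_def by simp
        next
          case False then have "0 - i < 0" using \<open>i \<noteq> 0\<close> by simp
          then show ?thesis using mult.IH(2) unfolding good_def by simp
        qed
      qed (use N in auto)
      thus "(\<Sum>i\<in>{0-N..N}. P (Y x i) * P (Y y (0 - i))) = x * y" using mult.IH unfolding good_def by simp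
    qed
    ultimately show ?case unfolding good_def by blast
  qed
qed

lemma PY_neg: "k < 0 \<Longrightarrow> P (Y v k) = 0" using good_all unfolding good_def by blast
lemma PY_0: "P (Y v 0) = v" using good_all unfolding good_def by blast

definition D :: "'a \<Rightarrow> 'a" where "D = Dstar sc sc2 tens c Y"
lemma D_eq: "D v = P (Y v 1)" unfolding D_def Dstar_def P_def by simp

lemma D_lin: "clinear_map sc sc D"
  unfolding clinear_map_def D_eq by (simp add: Y_addk Y_scalk P_add P_scal)

lemma D_mult: "D (u * v) = D u * v + u * D v"
proof -
  obtain N where N: "N \<ge> 1" "\<forall>i>N. Y u i = 0" "\<forall>i>N. Y v i = 0" using Y_bound2 by blast
  have "D (u * v) = (\<Sum>i\<in>{1-N..N}. P (Y u i) * P (Y v (1 - i)))"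
    unfolding D_eq by (simp add: Y_mult_sum[OF N(2,3)] P_sum P_mult)
  also have "\<dots> = P (Y u 0) * P (Y v (1 - 0)) + P (Y u 1) * P (Y v (1 - 1))"
  proof (rule sum_two)
    fix i assume "i \<in> {1-N..N}" "i \<noteq> 0" "i \<noteq> 1"
    show "P (Y u i) * P (Y v (1 - i)) = 0"
    proof (cases "i < 0")
      case True then show ?thesis using PY_neg by simp
    next
      case False then have "1 - i < 0" using \<open>i \<noteq> 0\<close> \<open>i \<noteq> 1\<close> by simp
      then show ?thesis using PY_neg by simp
    qed
  qed (use N in auto)
  also have "\<dots> = D u * v + u * D v" by (simp add: PY_0 D_eq)
  finally show ?thesis .
qed

end


context ctx begin

lemma D_add: "D (x + y) = D x + D y" by (rule lin_add[OF D_lin])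
lemma D_scal: "D (sc z * x) = sc z * D x" by (rule lin_scal[OF D_lin])
lemma D_diff: "D (x - y) = D x - D y" by (rule lin_diff[OF D_lin])
lemma D_one: "D 1 = 0" unfolding D_eq by (simp add: Y_one lone_def P_zero)

lemma D_t0: "D (t 0 n) = sc (of_nat n) * t 0 (n - 1)"
proof (cases n)
  case 0 thus ?thesis unfolding D_eq by (simp add: Y_t0n Y_t0_def P_zero calg_zero[OF alg])
next
  case (Suc m) thus ?thesis unfolding D_eq
    by (simp add: Y_t0n Y_t0_def P_scal P_tens c_one calg_one[OF alg])
qed

lemma D_t20: "D (t 2 0) = 0"
  unfolding D_eq by (simp add: Y_t20 Y_t2_def P_zero)

lemma D_comm: "D (comm x y) = comm (D x) y + comm x (D y)"
  unfolding comm_def by (simp add: D_diff D_mult algebra_simps)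

lemma comm_scal: "comm x (sc z * y) = sc z * comm x y"
proof -
  have "x * (sc z * y) = sc z * (x * y)" by (metis calg_comm[OF alg] mult.assoc)
  thus ?thesis unfolding comm_def by (simp add: right_diff_distrib mult.assoc)
qed

lemma comm_zero: "comm 0 y = 0" unfolding comm_def by simp

lemma rel20: "comm (t 2 0) (t a d) = sc (2 * of_nat d) * t (a + 1) (d - 1)"
  using rels unfolding A_relations_def by blast

lemma D_t: "D (t a b) = sc (of_nat b) * t a (b - 1)"
proof (induction a arbitrary: b)
  case 0 thus ?case by (rule D_t0)
next
  case (Suc a)
  define q :: complex where "q = 2 * of_nat (Suc b)"
  have q0: "q \<noteq> 0" unfolding q_def by (simp only: mult_eq_0_iff of_nat_eq_0_iff) simp
  have r: "comm (t 2 0) (t a (Suc b)) = sc q * t (Suc a) b" using rel20[of a "Suc b"] by (simp add: q_def)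
  have tt: "t (Suc a) b = sc (1 / q) * comm (t 2 0) (t a (Suc b))"
  proof -
    have "sc (1 / q) * comm (t 2 0) (t a (Suc b)) = sc (1 / q) * sc q * t (Suc a) b"
      by (simp add: r mult.assoc)
    also have "\<dots> = t (Suc a) b" using q0 by (simp add: calg_mult[OF alg, symmetric] calg_one[OF alg])
    finally show ?thesis by simp
  qed
  have "D (t (Suc a) b) = sc (1 / q) * comm (t 2 0) (sc (of_nat (Suc b)) * t a b)"
    by (subst tt) (simp add: D_scal D_comm D_t20 comm_zero Suc)
  also have "\<dots> = sc (1 / q) * sc (of_nat (Suc b)) * sc (2 * of_nat b) * t (Suc a) (b - 1)"
    by (simp add: comm_scal rel20 mult.assoc)
  also have "\<dots> = sc (1 / q * of_nat (Suc b) * (2 * of_nat b)) * t (Suc a) (b - 1)"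
    by (simp only: calg_mult[OF alg])
  also have "1 / q * of_nat (Suc b) * (2 * of_nat b) = (of_nat b :: complex)"
  proof -
    have "of_nat (Suc b) * (2 * of_nat b) = q * (of_nat b :: complex)" unfolding q_def by (simp add: algebra_simps)
    hence "1 / q * of_nat (Suc b) * (2 * of_nat b) = 1 / q * (q * (of_nat b :: complex))"
      by (simp only: mult.assoc)
    also have "\<dots> = of_nat b" using q0 by simp
    finally show ?thesis .
  qed
  finally show ?case .
qed

lemma tens_zero2: "tens x 0 = 0" using lin_zero[OF bil_lin2[OF tb]] .
lemma tens_zero1: "tens 0 y = 0" using lin_zero[OF bil_lin1[OF tb]] .

lemma IdDbil: "cbilinear sc sc2 (\<lambda>x y. tens x (D y))"
  by (rule bilI) (simp_all add: bil_add1[OF tb] bil_add2[OF tb] bil_scal1[OF tb] bil_scal2[OF tb] D_add D_scal)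

definition IdD :: "'b \<Rightarrow> 'b" where "IdD = tlift sc2 sc2 tens (\<lambda>x y. tens x (D y))"

lemma IdD_lin: "clinear_map sc2 sc2 IdD" unfolding IdD_def by (rule tlift_b(1)[OF tensor IdDbil])
lemma IdD_tens: "IdD (tens x y) = tens x (D y)" unfolding IdD_def by (rule tlift_b(2)[OF tensor IdDbil])
lemma IdD_add: "IdD (x + y) = IdD x + IdD y" by (rule lin_add[OF IdD_lin])
lemma IdD_scal: "IdD (sc2 z * x) = sc2 z * IdD x" by (rule lin_scal[OF IdD_lin])
lemma IdD_zero: "IdD 0 = 0" by (rule lin_zero[OF IdD_lin])
lemma IdD_diff: "IdD (x - y) = IdD x - IdD y" by (rule lin_diff[OF IdD_lin])
lemma IdD_sum: "IdD (sum g S) = (\<Sum>i\<in>S. IdD (g i))" by (rule lin_sum[OF IdD_lin])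
lemma IdD_one: "IdD 1 = 0"
  using IdD_tens[of 1 1] by (simp add: ts_one[OF tensor] D_one tens_zero2)

lemma IdD_mult1: "IdD (x * tens a b) = IdD x * tens a b + x * IdD (tens a b)"
proof -
  have l1: "clinear_map sc2 sc2 (\<lambda>x. IdD (x * tens a b))"
    unfolding clinear_map_def by (simp add: distrib_right IdD_add mult.assoc IdD_scal)
  have l2: "clinear_map sc2 sc2 (\<lambda>x. IdD x * tens a b + x * IdD (tens a b))"
    unfolding clinear_map_def by (simp add: distrib_right IdD_add mult.assoc IdD_scal distrib_left)
  have eq: "IdD (tens x y * tens a b) = IdD (tens x y) * tens a b + tens x y * IdD (tens a b)" for x y
    by (simp add: ts_mult[OF tensor] IdD_tens D_mult bil_add2[OF tb])
  have "(\<lambda>x. IdD (x * tens a b)) = (\<lambda>x. IdD x * tens a b + x * IdD (tens a b))"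
    by (rule ext_b[OF tensor l1 l2]) (rule eq)
  thus ?thesis by metis
qed

lemma IdD_mult: "IdD (x * y) = IdD x * y + x * IdD y"
proof -
  have cm: "u * (sc2 z * v) = sc2 z * (u * v)" for u v z by (metis calg_comm[OF alg2] mult.assoc)
  have l1: "clinear_map sc2 sc2 (\<lambda>y. IdD (x * y))"
    unfolding clinear_map_def by (simp add: distrib_left IdD_add cm IdD_scal)
  have l2: "clinear_map sc2 sc2 (\<lambda>y. IdD x * y + x * IdD y)"
    unfolding clinear_map_def by (simp add: distrib_left IdD_add cm IdD_scal)
  have "(\<lambda>y. IdD (x * y)) = (\<lambda>y. IdD x * y + x * IdD y)"
    by (rule ext_b[OF tensor l1 l2]) (rule IdD_mult1)
  thus ?thesis by metis
qed

end


context ctx begin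

lemma of_int_b: "(of_int m :: 'b) = sc2 (of_int m)" by (simp add: calg_of_int[OF alg2])
lemma of_nat_b: "(of_nat m :: 'b) = sc2 (of_nat m)" by (simp add: calg_of_nat[OF alg2])

lemma Y_t0n': "Y (t 0 n) = Y_t0 tens sc2 t n" using Y_t0n by blast

lemma Y_t0_int: "Y_t0 tens sc2 t n (int j) = (if j = 0 then tens 1 (t 0 n) else 0)
   + (if j \<le> n then sc2 (of_nat (n choose j)) * tens (t 0 (n - j)) 1 else 0)"
  by (simp add: Y_t0_def)

lemma Y_t0_neg: "k < 0 \<Longrightarrow> Y_t0 tens sc2 t n k = 0"
  by (simp add: Y_t0_def)

lemma IdD_Yt0: "IdD (Y (t 0 n) k) = (if k = 0 then sc2 (of_nat n) * tens 1 (t 0 (n - 1)) else 0)"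
  by (simp add: Y_t0n Y_t0_def IdD_add IdD_scal IdD_tens D_one tens_zero2 D_t0 bil_scal2[OF tb] IdD_zero)

lemma R_t0: "of_int (k + 1) * Y (t 0 n) (k + 1) = Y (D (t 0 n)) k - IdD (Y (t 0 n) k)"
proof (cases "k \<ge> 0")
  case False
  have "of_int (k + 1) * Y (t 0 n) (k + 1) = 0"
  proof (cases "k + 1 = 0")
    case True thus ?thesis by simp
  next
    case False thus ?thesis using \<open>\<not> k \<ge> 0\<close> by (simp add: Y_t0n Y_t0_neg)
  qed
  moreover have "Y (D (t 0 n)) k = 0" using False by (simp add: D_t0 Y_scalk Y_t0n Y_t0_neg)
  moreover have "IdD (Y (t 0 n) k) = 0" using False by (simp add: IdD_Yt0)
  ultimately show ?thesis by simp
next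
  case True
  then obtain j where k: "k = int j" by (metis nonneg_eq_int)
  have k1: "k + 1 = int (Suc j)" using k by simp
  have lhs: "of_int (k + 1) * Y (t 0 n) (k + 1) =
     (if Suc j \<le> n then sc2 (of_nat (Suc j) * of_nat (n choose Suc j)) * tens (t 0 (n - Suc j)) 1 else 0)"
  proof -
    have y: "Y (t 0 n) (k+1) = (if Suc j = 0 then tens 1 (t 0 n) else 0) + (if Suc j \<le> n then sc2 (of_nat (n choose Suc j)) * tens (t 0 (n - Suc j)) 1 else 0)"
      unfolding k1 Y_t0n' by (rule Y_t0_int)
    have o: "(of_int (k+1) :: 'b) = sc2 (of_nat (Suc j))" unfolding k1 by (simp only: of_int_of_nat_eq of_nat_b)
    show ?thesis unfolding y o by (simp add: calg_mult[OF alg2] mult.assoc)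
  qed
  have rhs: "Y (D (t 0 n)) k - IdD (Y (t 0 n) k) =
     sc2 (of_nat n) * (if j \<le> n - 1 then sc2 (of_nat ((n - 1) choose j)) * tens (t 0 (n - 1 - j)) 1 else 0)"
    unfolding k IdD_Yt0 by (simp add: D_t0 Y_scalk Y_t0n Y_t0_int distrib_left)
  show ?thesis
  proof (cases n)
    case 0 thus ?thesis using lhs rhs by (simp add: calg_zero[OF alg2])
  next
    case (Suc m)
    have "(of_nat (Suc j) * of_nat (Suc m choose Suc j) :: complex) = of_nat (Suc m) * of_nat (m choose j)"
      by (metis Suc_times_binomial of_nat_mult)
    thus ?thesis using lhs rhs Suc by (simp add: calg_mult[OF alg2] mult.assoc)
  qed
qed


definition coef :: "nat \<Rightarrow> nat \<Rightarrow> complex" where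
  "coef n m = 2 * sigma3 e1 e2 e3 * of_nat (fact (m + n + 1)) / (of_nat (fact m) * of_nat (fact n)) * (-1) ^ n"

lemma coef_rec: "(of_nat (m + n) + 2) * coef n m = coef n (Suc m) * of_nat (Suc m)"
proof -
  have f1: "(of_nat (fact (Suc m + n + 1)) :: complex) = (of_nat (m+n) + 2) * of_nat (fact (m+n+1))"
    by (simp add: algebra_simps)
  have f2: "(of_nat (fact (Suc m)) :: complex) = of_nat (Suc m) * of_nat (fact m)"
    by (simp add: algebra_simps)
  have nz: "(of_nat (fact m) :: complex) \<noteq> 0" "(of_nat (fact n) :: complex) \<noteq> 0" "(of_nat (Suc m) :: complex) \<noteq> 0"
    by (simp_all del: of_nat_Suc)
  have gen: "\<And>K c F A B x (s::complex). s \<noteq> 0 \<Longrightarrow> A \<noteq> 0 \<Longrightarrow> B \<noteq> 0 \<Longrightarrow>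
      K * (c * F / (A * B) * x) = c * (K * F) / (s * A * B) * x * s"
    by (simp add: field_simps)
  show ?thesis unfolding coef_def f1 f2 by (rule gen[OF nz(3) nz(1) nz(2)])
qed

lemma Y_t2_neg: "k \<le> -2 \<Longrightarrow> Y (t 2 0) k = (\<Sum>n\<in>{0..nat (-k-2)}. sc2 (coef n (nat (-k-2) - n)) * tens (t 0 n) (t 0 (nat (-k-2) - n)))"
  by (simp add: Y_t20 Y_t2_def Let_def coef_def)

lemma Y_t2_other: "k > -2 \<Longrightarrow> k \<noteq> 0 \<Longrightarrow> Y (t 2 0) k = 0"
  by (simp add: Y_t20 Y_t2_def)

lemma IdD_Yt2_0: "IdD (Y (t 2 0) 0) = 0"
  by (simp add: Y_t20 Y_t2_def IdD_add IdD_tens D_t20 D_one tens_zero2)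

lemma R_t20: "of_int (k + 1) * Y (t 2 0) (k + 1) = Y (D (t 2 0)) k - IdD (Y (t 2 0) k)"
proof (cases "k \<ge> -1")
  case True
  have "of_int (k + 1) * Y (t 2 0) (k + 1) = 0"
  proof (cases "k = -1")
    case True thus ?thesis by simp
  next
    case False thus ?thesis using \<open>k \<ge> -1\<close> by (simp add: Y_t2_other)
  qed
  moreover have "IdD (Y (t 2 0) k) = 0"
  proof (cases "k = 0")
    case True thus ?thesis by (simp add: IdD_Yt2_0)
  next
    case False thus ?thesis using \<open>k \<ge> -1\<close> by (simp add: Y_t2_other IdD_zero)
  qed
  ultimately show ?thesis by (simp add: D_t20 Y_zero)
next
  case False
  define N where "N = nat (-k-2)"
  have k: "k = - int N - 2" using False unfolding N_def by simp
  have rhs: "Y (D (t 2 0)) k - IdD (Y (t 2 0) k) =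
     - (\<Sum>n\<in>{0..N}. sc2 (coef n (N - n)) * tens (t 0 n) (sc (of_nat (N - n)) * t 0 (N - n - 1)))"
  proof -
    have yk: "Y (t 2 0) k = (\<Sum>n\<in>{0..N}. sc2 (coef n (N - n)) * tens (t 0 n) (t 0 (N - n)))"
      using Y_t2_neg[of k] False unfolding N_def by simp
    show ?thesis unfolding yk IdD_sum
      by (simp add: D_t20 Y_zero IdD_scal IdD_tens D_t0 del: of_nat_diff)
  qed
  show ?thesis
  proof (cases N)
    case 0
    have "of_int (k + 1) * Y (t 2 0) (k + 1) = 0" using k 0 by (simp add: Y_t2_other)
    thus ?thesis using rhs 0 by (simp add: calg_zero[OF alg] tens_zero2)
  next
    case (Suc M)
    have k1: "k + 1 \<le> -2" "nat (-(k+1)-2) = M" using k Suc by simp_all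
    have lhs: "of_int (k + 1) * Y (t 2 0) (k + 1) =
       (\<Sum>n\<in>{0..M}. sc2 (- (of_nat M + 2) * coef n (M - n)) * tens (t 0 n) (t 0 (M - n)))"
    proof -
      have kk: "k + 1 = - (int M + 2)" using k Suc by simp
      have kc: "(of_int (k+1)::complex) = - (of_nat M + 2)" unfolding kk by simp
      have o: "(of_int (k+1) :: 'b) = sc2 (- (of_nat M + 2))" by (subst of_int_b) (simp only: kc)
      show ?thesis unfolding Y_t2_neg[OF k1(1)] k1(2) o sum_distrib_left
        by (simp add: calg_mult[OF alg2] mult.assoc)
    qed
    have "(\<Sum>n\<in>{0..N}. sc2 (coef n (N - n)) * tens (t 0 n) (sc (of_nat (N - n)) * t 0 (N - n - 1)))
        = (\<Sum>n\<in>{0..M}. sc2 (coef n (N - n)) * tens (t 0 n) (sc (of_nat (N - n)) * t 0 (N - n - 1)))"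
      unfolding Suc sum.atLeast0_atMost_Suc by (simp add: calg_zero[OF alg] tens_zero2)
    also have "\<dots> = (\<Sum>n\<in>{0..M}. sc2 ((of_nat M + 2) * coef n (M - n)) * tens (t 0 n) (t 0 (M - n)))"
    proof (rule sum.cong[OF refl])
      fix n assume "n \<in> {0..M}"
      hence nm: "n \<le> M" by simp
      have e1: "N - n = Suc (M - n)" "N - n - 1 = M - n" using nm Suc by simp_all
      have cr: "(of_nat M + 2) * coef n (M - n) = coef n (Suc (M - n)) * of_nat (Suc (M - n))"
        using coef_rec[of "M - n" n] nm by simp
      show "sc2 (coef n (N - n)) * tens (t 0 n) (sc (of_nat (N - n)) * t 0 (N - n - 1)) =
            sc2 ((of_nat M + 2) * coef n (M - n)) * tens (t 0 n) (t 0 (M - n))"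
        unfolding e1 cr by (simp add: bil_scal2[OF tb] calg_mult[OF alg2] mult.assoc)
    qed
    finally have "Y (D (t 2 0)) k - IdD (Y (t 2 0) k) =
       - (\<Sum>n\<in>{0..M}. sc2 ((of_nat M + 2) * coef n (M - n)) * tens (t 0 n) (t 0 (M - n)))"
      using rhs by simp
    moreover have neg: "\<And>n. sc2 (- (of_nat M + 2) * coef n (M - n)) = - sc2 ((of_nat M + 2) * coef n (M - n))"
      by (simp only: mult_minus_left calg_neg[OF alg2])
    ultimately show ?thesis unfolding lhs neg minus_mult_left by (simp add: sum_negf)
  qed
qed
end



lemma lmul_I:
  fixes F G :: "int \<Rightarrow> 'b::ring"
  assumes "\<forall>i>N. F i = 0" "\<forall>i>N. G i = 0" "finite I" "\<And>i. i \<notin> I \<Longrightarrow> i > N \<or> k - i > N"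
  shows "lmul F G k = (\<Sum>i\<in>I. F i * G (k - i))"
proof -
  have l: "laurent F" "laurent G" using assms unfolding laurent_def by blast+
  show ?thesis unfolding lmul_fsum[OF l]
  proof (rule fsum_superset[OF assms(3)])
    fix i assume "i \<notin> I"
    then have "i > N \<or> k - i > N" using assms(4) by blast
    thus "F i * G (k - i) = 0" using assms(1,2) by auto
  qed
qed

lemma of_int_split:
  fixes a b :: "'b::ring_1"
  shows "of_int (k + 1) * (a * b) = (of_int i * a) * b + a * (of_int (k + 1 - i) * b)"
proof -
  have e: "(of_int (k + 1) :: 'b) = of_int i + of_int (k + 1 - i)" by (metis add.commute diff_add_cancel of_int_add)
  have "of_int (k + 1) * (a * b) = of_int i * (a * b) + of_int (k + 1 - i) * (a * b)"
    by (simp only: e distrib_right)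
  also have "of_int i * (a * b) = (of_int i * a) * b" by (simp only: mult.assoc)
  also have "of_int (k + 1 - i) * (a * b) = (of_int (k + 1 - i) * a) * b" by (simp only: mult.assoc)
  also have "of_int (k + 1 - i) * a = a * of_int (k + 1 - i)" by (rule mult_of_int_commute)
  also have "(a * of_int (k + 1 - i)) * b = a * (of_int (k + 1 - i) * b)" by (simp only: mult.assoc)
  finally show ?thesis .
qed

context ctx begin

definition R :: "'a \<Rightarrow> bool" where
  "R v \<longleftrightarrow> (\<forall>k. of_int (k + 1) * Y v (k + 1) = Y (D v) k - IdD (Y v k))"

lemma Y_bound4: "\<exists>N. N \<ge> 0 \<and> (\<forall>i>N. Y u i = 0) \<and> (\<forall>i>N. Y v i = 0) \<and> (\<forall>i>N. Y w i = 0) \<and> (\<forall>i>N. Y z i = 0)"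
proof -
  obtain N1 where "\<forall>i>N1. Y u i = 0" using Y_bound by blast
  moreover obtain N2 where "\<forall>i>N2. Y v i = 0" using Y_bound by blast
  moreover obtain N3 where "\<forall>i>N3. Y w i = 0" using Y_bound by blast
  moreover obtain N4 where "\<forall>i>N4. Y z i = 0" using Y_bound by blast
  ultimately show ?thesis by (intro exI[of _ "max 0 (max (max N1 N2) (max N3 N4))"]) auto
qed

lemma R_mult:
  assumes Rx: "R x" and Ry: "R y"
  shows "R (x * y)"
  unfolding R_def
proof
  fix k
  obtain N where N: "N \<ge> 0" "\<forall>i>N. Y x i = 0" "\<forall>i>N. Y y i = 0" "\<forall>i>N. Y (D x) i = 0" "\<forall>i>N. Y (D y) i = 0"
    using Y_bound4 by blast
  define I where "I = {k - N..N + 1}"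
  have fI: "finite I" unfolding I_def by simp
  have outI: "i > N + 1 \<or> i < k - N" if "i \<notin> I" for i using that unfolding I_def by auto
  have ihx: "of_int (j + 1) * Y x (j + 1) = Y (D x) j - IdD (Y x j)" for j using Rx unfolding R_def by blast
  have ihy: "of_int (j + 1) * Y y (j + 1) = Y (D y) j - IdD (Y y j)" for j using Ry unfolding R_def by blast
  have L1: "Y (x * y) (k + 1) = (\<Sum>i\<in>I. Y x i * Y y (k + 1 - i))"
    unfolding Y_mult[rule_format] by (rule lmul_I[OF N(2,3) fI]) (use outI in fastforce)
  have first: "(\<Sum>i\<in>I. (of_int i * Y x i) * Y y (k + 1 - i)) = (\<Sum>j\<in>I. (Y (D x) j - IdD (Y x j)) * Y y (k - j))"
  proof -
    define f where "f i = (of_int i * Y x i) * Y y (k + 1 - i)" for i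
    have "(\<Sum>i\<in>I. f i) = fsum f"
    proof (rule fsum_superset[OF fI, symmetric])
      fix i assume "i \<notin> I"
      then have "i > N \<or> k + 1 - i > N" using outI by fastforce
      thus "f i = 0" unfolding f_def using N by auto
    qed
    also have "\<dots> = fsum (\<lambda>j. f (j + 1))" by (rule fsum_shift[symmetric])
    also have "\<dots> = (\<Sum>j\<in>I. f (j + 1))"
    proof (rule fsum_superset[OF fI])
      fix j assume "j \<notin> I"
      then have "j + 1 > N \<or> k + 1 - (j + 1) > N" using outI by fastforce
      thus "f (j + 1) = 0" unfolding f_def using N by auto
    qed
    also have "\<dots> = (\<Sum>j\<in>I. (Y (D x) j - IdD (Y x j)) * Y y (k - j))"
      by (rule sum.cong[OF refl]) (unfold f_def ihx, simp)
    finally show ?thesis unfolding f_def .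
  qed
  have second: "(\<Sum>i\<in>I. Y x i * (of_int (k + 1 - i) * Y y (k + 1 - i))) = (\<Sum>i\<in>I. Y x i * (Y (D y) (k - i) - IdD (Y y (k - i))))"
  proof (rule sum.cong[OF refl])
    fix i
    have "of_int (k + 1 - i) * Y y (k + 1 - i) = of_int ((k - i) + 1) * Y y ((k - i) + 1)" by (simp add: algebra_simps)
    also have "\<dots> = Y (D y) (k - i) - IdD (Y y (k - i))" by (rule ihy)
    finally show "Y x i * (of_int (k + 1 - i) * Y y (k + 1 - i)) = Y x i * (Y (D y) (k - i) - IdD (Y y (k - i)))" by simp
  qed
  have lhs: "of_int (k + 1) * Y (x * y) (k + 1) = (\<Sum>j\<in>I. (Y (D x) j - IdD (Y x j)) * Y y (k - j)) + (\<Sum>i\<in>I. Y x i * (Y (D y) (k - i) - IdD (Y y (k - i))))"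
  proof -
    have "of_int (k + 1) * Y (x * y) (k + 1) = (\<Sum>i\<in>I. of_int (k + 1) * (Y x i * Y y (k + 1 - i)))"
      unfolding L1 sum_distrib_left ..
    also have "\<dots> = (\<Sum>i\<in>I. (of_int i * Y x i) * Y y (k + 1 - i) + Y x i * (of_int (k + 1 - i) * Y y (k + 1 - i)))"
      by (rule sum.cong[OF refl]) (rule of_int_split)
    also have "\<dots> = (\<Sum>i\<in>I. (of_int i * Y x i) * Y y (k + 1 - i)) + (\<Sum>i\<in>I. Y x i * (of_int (k + 1 - i) * Y y (k + 1 - i)))"
      by (rule sum.distrib)
    finally show ?thesis unfolding first second .
  qed
  have outI2: "i > N \<or> k - i > N" if "i \<notin> I" for i using outI[OF that] by auto
  have r1: "Y (D (x * y)) k = (\<Sum>j\<in>I. Y (D x) j * Y y (k - j)) + (\<Sum>i\<in>I. Y x i * Y (D y) (k - i))"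
    unfolding D_mult Y_addk Y_mult[rule_format]
    by (simp add: lmul_I[OF N(4,3) fI outI2] lmul_I[OF N(2,5) fI outI2])
  have r2: "IdD (Y (x * y) k) = (\<Sum>i\<in>I. IdD (Y x i) * Y y (k - i) + Y x i * IdD (Y y (k - i)))"
  proof -
    have lm: "lmul (Y x) (Y y) k = (\<Sum>i\<in>I. Y x i * Y y (k - i))" by (rule lmul_I[OF N(2,3) fI outI2])
    show ?thesis unfolding Y_mult[rule_format] lm IdD_sum IdD_mult ..
  qed
  show "of_int (k + 1) * Y (x * y) (k + 1) = Y (D (x * y)) k - IdD (Y (x * y) k)"
    unfolding lhs r1 r2
    by (simp add: sum.distrib sum_subtractf left_diff_distrib right_diff_distrib algebra_simps)
qed

lemma R_all: "R v"
proof -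
  have "v \<in> alg_gen sc ({t 2 0} \<union> range (t 0))" using generated by simp
  thus ?thesis
  proof (induction rule: alg_gen.induct)
    case (gen x)
    then show ?case
    proof
      assume "x \<in> {t 2 0}" thus ?thesis unfolding R_def using R_t20 by simp
    next
      assume "x \<in> range (t 0)" thus ?thesis unfolding R_def using R_t0 by auto
    qed
  next
    case (scal z)
    have d: "D (sc z) = 0" using D_scal[of z 1] D_one by simp
    show ?case unfolding R_def
    proof
      fix k
      have l: "of_int (k + 1) * Y (sc z) (k + 1) = 0"
      proof (cases "k + 1 = 0")
        case True thus ?thesis by (simp only: True of_int_0 mult_zero_left)
      next
        case False thus ?thesis by (simp add: Y_const lone_def)
      qed
      have r: "Y (D (sc z)) k - IdD (Y (sc z) k) = 0"
        by (simp add: d Y_zero Y_const IdD_scal lone_def IdD_one IdD_zero)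
      show "of_int (k + 1) * Y (sc z) (k + 1) = Y (D (sc z)) k - IdD (Y (sc z) k)" using l r by simp
    qed
  next
    case (add x y)
    then show ?case unfolding R_def by (simp add: Y_addk D_add IdD_add distrib_left)
  next
    case (mult x y)
    then show ?case using R_mult[OF mult.IH] by blast
  qed
qed

lemma main:
  "let D = Dstar sc sc2 tens c Y;
       IdD = tlift sc2 sc2 tens (\<lambda>x y. tens x (D y))
   in clinear_map sc sc D
    \<and> (\<forall>u v. D (u * v) = D u * v + u * D v)
    \<and> (\<forall>a b. D (t a b) = sc (of_nat b) * t a (b - 1))
    \<and> (\<forall>v k. of_int (k + 1) * Y v (k + 1) = Y (D v) k - IdD (Y v k))"
  unfolding Let_def D_def[symmetric] IdD_def[symmetric]
  using D_lin D_mult D_t R_all unfolding R_def by blast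

end


theorem mainTheorem2:
  fixes sc :: "complex \<Rightarrow> 'a::ring_1" and sc2 :: "complex \<Rightarrow> 'b::ring_1"
    and tens :: "'a \<Rightarrow> 'a \<Rightarrow> 'b"
    and e1 e2 e3 :: complex
    and t :: "nat \<Rightarrow> nat \<Rightarrow> 'a"
    and Y :: "'a \<Rightarrow> int \<Rightarrow> 'b"
    and c :: "'a \<Rightarrow> complex"
  assumes eps: "e1 + e2 + e3 = 0"
    and alg: "calg sc"
    and tensor: "is_tensor_square sc sc2 tens"
    and rels: "A_relations sc e1 e2 e3 t"
    and generated: "alg_gen sc ({t 2 0} \<union> range (t 0)) = UNIV"
    and Y_laurent: "\<forall>v. laurent (Y v)"
    and Y_add: "\<forall>u v. Y (u + v) = (\<lambda>k. Y u k + Y v k)"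
    and Y_scal: "\<forall>z v. Y (sc z * v) = (\<lambda>k. sc2 z * Y v k)"
    and Y_mult: "\<forall>u v. Y (u * v) = lmul (Y u) (Y v)"
    and Y_one: "Y 1 = lone"
    and Y_t0n: "\<forall>n. Y (t 0 n) = Y_t0 tens sc2 t n"
    and Y_t20: "Y (t 2 0) = Y_t2 tens sc2 (sigma3 e1 e2 e3) t"
    and c_lin: "clinear_map sc (\<lambda>z. z) c"
    and c_mult: "\<forall>u v. c (u * v) = c u * c v"
    and c_one: "c 1 = 1"
    and c_t: "\<forall>a b. c (t a b) = 0"
  shows "let D = Dstar sc sc2 tens c Y;
             IdD = tlift sc2 sc2 tens (\<lambda>x y. tens x (D y))
         in clinear_map sc sc D
          \<and> (\<forall>u v. D (u * v) = D u * v + u * D v)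
          \<and> (\<forall>a b. D (t a b) = sc (of_nat b) * t a (b - 1))
          \<and> (\<forall>v k. of_int (k + 1) * Y v (k + 1) = Y (D v) k - IdD (Y v k))"
  proof -
  have "ctx sc sc2 tens e1 e2 e3 t Y c"
    unfolding ctx_def using assms by blast
  thus ?thesis by (rule ctx.main)
qed

end
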